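(* Under the standing assumptions, if $g$ is e-convex, then $$v(P)\ \ge\ v(\bar D^F)\ \ge\ v(D^F).$$
   Context: Let $X$ be a nontrivial separated locally convex space with topological dual $X^*$, endowed with the topology $\sigma(X,X^* )$; $\langle x,x^*\rangle$ is the value of $x^*\in X^*$ at $x\in X$. Put $W:=X^*\times X^*\times\mathbb{R}$, $\mathbb{R}_{++}:=]0,+\infty[$ and $Z:=X^*\times X^*\times\mathbb{R}_{++}$. For $y^*\in X^*$, $\alpha\in\mathbb{R}$, let $H^-_{y^*,\alpha}:=\{x\in X:\langle x,y^*\rangle<\alpha\}$. The coupling function $c:X\times W\to\overline{\mathbb{R}}$ is $c(x,(x^*,y^*,\alpha)):=\langle x,x^*\rangle$ if $\langle x,y^*\rangle<\alpha$ and $:=+\infty$ otherwise; $c'((x^*,y^*,\alpha),x):=c(x,(x^*,y^*,\alpha))$. For $h:X\to\overline{\mathbb{R}}$ its $c$-conjugate is $h^c:W\to\overline{\mathbb{R}}$, $h^c(w):=\sup_{x\in X}\{c(x,w)-h(x)\}$; for $k:W\to\overline{\mathbb{R}}$, $k^{c'}(x):=\sup_{w\in W}\{c'(w,x)-k(w)\}$. In these conjugations the convention $(+\infty)+(-\infty)=(-\infty)+(+\infty)=(+\infty)-(+\infty)=(-\infty)-(-\infty)=-\infty$ is used (so for proper $h$, $h^c(x^*,y^*,\alpha)=h^*(x^* )$ if $\operatorname{dom}h\subseteq H^-_{y^*,\alpha}$ and $+\infty$ otherwise, $h^*$ the Fenchel conjugate). $\operatorname{dom}$ and $\operatorname{epi}$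 denote effective domain and epigraph; $\delta_A$ is the indicator function of $A$ ($0$ on $A$, $+\infty$ outside). A set $C\subseteq X$ is e-convex if for every $x_0\notin C$ there is $x^*\in X^*$ with $\langle x-x_0,x^*\rangle<0$ for all $x\in C$; a function is e-convex if its epigraph is e-convex in $X\times\mathbb{R}$. Standing assumptions: $f,g:X\to\overline{\mathbb{R}}$ are proper convex functions with $\operatorname{dom}f\subseteq\operatorname{dom}g$, $A\subseteq X$ is nonempty, and in the objective $f-g$ the convention $(+\infty)-(+\infty)=+\infty$ is used. The primal problem $(P)$ is $\inf_{x\in A}\{f(x)-g(x)\}$, with value $v(P)=\inf_{x\in X}\{f(x)-g(x)+\delta_A(x)\}$. For $(u^*,v^*,\gamma),(x^*,y^*,\alpha)\in W$ set $\varphi(u^*,v^*,\gamma;x^*,y^*,\alpha):=g^c(u^*,v^*,\gamma)-f^c(u^*-x^*,-y^*,\alpha)-\delta_A^c(x^*,y^*,\alpha)$. The dual problems are $(D^F)$: $v(D^F):=\sup_{(x^*,y^*,\alpha)\in Z}\ \inf_{(u^*,v^*,\gamma)\in\operatorname{dom}g^c}\varphi(u^*,v^*,\gamma;x^*,y^*,\alpha)$, and $(\bar D^F)$: $v(\bar D^F):=\inf_{(u^*,v^*,\gamma)\in\operatorname{dom}g^c}\ \sup_{(x^*,y^*,\alpha)\in Z}\varphi(u^*,v^*,\gamma;x^*,y^*,\alpha)$. *)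

theory Defs
  imports "HOL-Analysis.Analysis"
begin

text \<open>Dual pair setting: X is a real vector space (type 'a), and Xs plays the role of X*,
  a point-separating linear subspace of the algebraic dual. Every separated locally convex
  space with its topological dual gives such a pair, and conversely sigma(X,Xs) is a separated
  locally convex topology with dual exactly Xs.\<close>

definition dual_pair :: "('a::real_vector \<Rightarrow> real) set \<Rightarrow> bool" where
  "dual_pair Xs \<longleftrightarrow>
     (\<forall>\<phi>\<in>Xs. linear \<phi>) \<and>
     (\<lambda>x. 0) \<in> Xs \<and>
     (\<forall>\<phi>\<in>Xs. \<forall>\<psi>\<in>Xs. (\<lambda>x. \<phi> x + \<psi> x) \<in> Xs) \<and>
     (\<forall>\<phi>\<in>Xs. \<forall>t::real. (\<lambda>x. t * \<phi> x) \<in> Xs) \<and>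
     (\<forall>x. x \<noteq> 0 \<longrightarrow> (\<exists>\<phi>\<in>Xs. \<phi> x \<noteq> 0))"

definition ladd :: "ereal \<Rightarrow> ereal \<Rightarrow> ereal" where
  "ladd a b = (if (a = \<infinity> \<and> b = -\<infinity>) \<or> (a = -\<infinity> \<and> b = \<infinity>) then -\<infinity> else a + b)"

definition lminus :: "ereal \<Rightarrow> ereal \<Rightarrow> ereal" where
  "lminus a b = ladd a (- b)"

definition epi :: "('a \<Rightarrow> ereal) \<Rightarrow> ('a \<times> real) set" where
  "epi h = {(x, r). h x \<le> ereal r}"

definition edom :: "('a \<Rightarrow> ereal) \<Rightarrow> 'a set" where
  "edom h = {x. h x < \<infinity>}"

definition proper_fun :: "('a \<Rightarrow> ereal) \<Rightarrow> bool" where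
  "proper_fun h \<longleftrightarrow> (\<forall>x. h x \<noteq> -\<infinity>) \<and> (\<exists>x. h x < \<infinity>)"

definition convex_fun :: "('a::real_vector \<Rightarrow> ereal) \<Rightarrow> bool" where
  "convex_fun h \<longleftrightarrow> convex (epi h)"

definition indicator_ereal :: "'a set \<Rightarrow> 'a \<Rightarrow> ereal" where
  "indicator_ereal A x = (if x \<in> A then 0 else \<infinity>)"

text \<open>e-convexity in X x R; the dual of X x R is X* x R.\<close>
definition e_convex_fun :: "('a::real_vector \<Rightarrow> real) set \<Rightarrow> ('a \<Rightarrow> ereal) \<Rightarrow> bool" where
  "e_convex_fun Xs h \<longleftrightarrow>
     (\<forall>x0 r0. (x0, r0) \<notin> epi h \<longrightarrow>
        (\<exists>xs\<in>Xs. \<exists>s::real. \<forall>(x, r)\<in>epi h. xs (x - x0) + s * (r - r0) < 0))"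

type_synonym 'a W = "('a \<Rightarrow> real) \<times> ('a \<Rightarrow> real) \<times> real"

definition Wset :: "('a \<Rightarrow> real) set \<Rightarrow> 'a W set" where
  "Wset Xs = Xs \<times> Xs \<times> UNIV"

definition Zset :: "('a \<Rightarrow> real) set \<Rightarrow> 'a W set" where
  "Zset Xs = Xs \<times> Xs \<times> {0<..}"

definition coupling :: "'a \<Rightarrow> 'a W \<Rightarrow> ereal" where
  "coupling x w = (case w of (xs, ys, \<alpha>) \<Rightarrow>
      if ys x < \<alpha> then ereal (xs x) else \<infinity>)"

definition c_conj :: "('a \<Rightarrow> real) set \<Rightarrow> ('a \<Rightarrow> ereal) \<Rightarrow> 'a W \<Rightarrow> ereal" where
  "c_conj Xs h w = (SUP x\<in>UNIV. lminus (coupling x w) (h x))"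

definition dom_W :: "('a \<Rightarrow> real) set \<Rightarrow> ('a W \<Rightarrow> ereal) \<Rightarrow> 'a W set" where
  "dom_W Xs k = {w \<in> Wset Xs. k w < \<infinity>}"

definition phi_F ::
  "('a \<Rightarrow> real) set \<Rightarrow> ('a \<Rightarrow> ereal) \<Rightarrow> ('a \<Rightarrow> ereal) \<Rightarrow> 'a set \<Rightarrow> 'a W \<Rightarrow> 'a W \<Rightarrow> ereal" where
  "phi_F Xs f g A u z = (case u of (us, vs, \<gamma>) \<Rightarrow> case z of (xs, ys, \<alpha>) \<Rightarrow>
      lminus (lminus (c_conj Xs g (us, vs, \<gamma>))
                     (c_conj Xs f (\<lambda>x. us x - xs x, \<lambda>x. - ys x, \<alpha>)))
             (c_conj Xs (indicator_ereal A) (xs, ys, \<alpha>)))"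

definition vP :: "('a \<Rightarrow> ereal) \<Rightarrow> ('a \<Rightarrow> ereal) \<Rightarrow> 'a set \<Rightarrow> ereal" where
  "vP f g A = (INF x\<in>UNIV. f x - g x + indicator_ereal A x)"

definition vDF :: "('a \<Rightarrow> real) set \<Rightarrow> ('a \<Rightarrow> ereal) \<Rightarrow> ('a \<Rightarrow> ereal) \<Rightarrow> 'a set \<Rightarrow> ereal" where
  "vDF Xs f g A = (SUP z\<in>Zset Xs. INF u\<in>dom_W Xs (c_conj Xs g). phi_F Xs f g A u z)"

definition vDF_bar :: "('a \<Rightarrow> real) set \<Rightarrow> ('a \<Rightarrow> ereal) \<Rightarrow> ('a \<Rightarrow> ereal) \<Rightarrow> 'a set \<Rightarrow> ereal" where
  "vDF_bar Xs f g A = (INF u\<in>dom_W Xs (c_conj Xs g). SUP z\<in>Zset Xs. phi_F Xs f g A u z)"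

end

theory Submission
  imports Defs
begin

lemma ladd_le_add: "ladd a b \<le> a + b"
  by (auto simp: ladd_def)

lemma ladd_mono:
  fixes a b a' b' :: ereal
  assumes "a \<le> a'" "b \<le> b'"
  shows "ladd a b \<le> ladd a' b'"
proof (cases "(a' = \<infinity> \<and> b' = -\<infinity>) \<or> (a' = -\<infinity> \<and> b' = \<infinity>)")
  case True
  then have "a = -\<infinity> \<or> b = -\<infinity>" using assms by auto
  then have "ladd a b = -\<infinity>" by (cases a; cases b; auto simp: ladd_def)
  then show ?thesis by simp
next
  case False
  then have "ladd a' b' = a' + b'" by (simp add: ladd_def)
  moreover have "a + b \<le> a' + b'" using assms by (rule add_mono)
  ultimately show ?thesis using ladd_le_add[of a b] by simp
qed

lemma lminus_mono:
  fixes a b a' b' :: ereal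
  assumes "a \<le> a'" "b' \<le> b"
  shows "lminus a b \<le> lminus a' b'"
  unfolding lminus_def using assms by (intro ladd_mono) auto

lemma lminus_inf_right: "lminus a \<infinity> = -\<infinity>"
  by (cases a) (auto simp: lminus_def ladd_def)

lemma lminus_minf_left: "lminus (-\<infinity>) b = -\<infinity>"
  by (cases b) (auto simp: lminus_def ladd_def)

lemma lminus_ereal[simp]: "lminus (ereal a) (ereal b) = ereal (a - b)"
  by (simp add: lminus_def ladd_def)

theorem mainTheorem1:
  fixes Xs :: "('a::real_vector \<Rightarrow> real) set"
    and f g :: "'a \<Rightarrow> ereal" and A :: "'a set"
  assumes "dual_pair Xs"
    and "\<exists>x::'a. x \<noteq> 0"
    and "proper_fun f" and "convex_fun f"
    and "proper_fun g" and "convex_fun g"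
    and "edom f \<subseteq> edom g"
    and "A \<noteq> {}"
    and "e_convex_fun Xs g"
  shows "vP f g A \<ge> vDF_bar Xs f g A \<and> vDF_bar Xs f g A \<ge> vDF Xs f g A"
proof
  have lin: "\<And>\<phi>. \<phi> \<in> Xs \<Longrightarrow> linear \<phi>" and zero: "(\<lambda>x. 0) \<in> Xs"
    and scal: "\<And>\<phi> t. \<phi> \<in> Xs \<Longrightarrow> (\<lambda>x. t * \<phi> x) \<in> Xs"
    using assms(1) by (auto simp: dual_pair_def)
  have fnm: "\<And>x. f x \<noteq> -\<infinity>" and gnm: "\<And>x. g x \<noteq> -\<infinity>"
    using assms(3,5) by (auto simp: proper_fun_def)
  show "vDF_bar Xs f g A \<le> vP f g A"
    unfolding vP_def
  proof (rule INF_greatest)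
    fix x assume "x \<in> (UNIV::'a set)"
    show "vDF_bar Xs f g A \<le> f x - g x + indicator_ereal A x"
    proof (cases "x \<in> A \<and> f x < \<infinity>")
      case False
      have fg: "f x < \<infinity> \<Longrightarrow> g x < \<infinity>" using assms(7) by (auto simp: edom_def)
      have "f x - g x \<noteq> -\<infinity>"
        using fnm[of x] gnm[of x] fg
        by (cases "f x"; cases "g x"; auto)
      then have eq: "f x - g x + indicator_ereal A x = \<infinity>"
        using False by (cases "f x - g x") (auto simp: indicator_ereal_def)
      show ?thesis unfolding eq by simp
    next
      case True
      then have xA: "x \<in> A" and "f x < \<infinity>" by auto
      then obtain fx where fx: "f x = ereal fx" using fnm[of x] by (cases "f x") auto
      have "g x < \<infinity>" using assms(7) \<open>f x < \<infinity>\<close> by (auto simp: edom_def)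
      then obtain gx where gx: "g x = ereal gx" using gnm[of x] by (cases "g x") auto
      show ?thesis
      proof (rule ereal_le_epsilon2)
        fix \<epsilon> :: real assume "0 < \<epsilon>"
        define r0 where "r0 = gx - \<epsilon>"
        have "(x, r0) \<notin> epi g" using \<open>0 < \<epsilon>\<close> by (simp add: epi_def gx r0_def)
        then obtain xs s where xs: "xs \<in> Xs"
          and sep: "\<forall>(y, r)\<in>epi g. xs (y - x) + s * (r - r0) < 0"
          using assms(9) unfolding e_convex_fun_def by blast
        have lxs: "linear xs" using lin xs by blast
        have "(x, gx) \<in> epi g" by (simp add: epi_def gx)
        with sep have "xs (x - x) + s * (gx - r0) < 0" by blast
        then have "s * \<epsilon> < 0" using linear_0[OF lxs] by (simp add: r0_def)
        then have sneg: "s < 0" using \<open>0 < \<epsilon>\<close> by (simp add: mult_less_0_iff)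
        define us where "us = (\<lambda>y. (-1/s) * xs y)"
        have usX: "us \<in> Xs" unfolding us_def using scal xs by blast
        define u where "u = (us, (\<lambda>y::'a. 0::real), 1::real)"
        have bound: "us y - gy < us x - gx + \<epsilon>" if "g y = ereal gy" for y gy
        proof -
          have "(y, gy) \<in> epi g" by (simp add: epi_def that)
          with sep have "xs (y - x) + s * (gy - r0) < 0" by blast
          then have "xs y - xs x + s * (gy - r0) < 0" using linear_diff[OF lxs] by simp
          then have "(xs y - xs x) / (-s) < gy - r0" using sneg
            by (simp add: field_simps)
          moreover have "us y - us x = (xs y - xs x) / (-s)"
            using sneg by (simp add: us_def diff_divide_distrib)
          ultimately show ?thesis by (simp add: r0_def)
        qed
        define G where "G = c_conj Xs g u"
        have Gle: "G \<le> ereal (us x - gx + \<epsilon>)"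
          unfolding G_def c_conj_def
        proof (rule SUP_least)
          fix y assume "y \<in> (UNIV::'a set)"
          show "lminus (coupling y u) (g y) \<le> ereal (us x - gx + \<epsilon>)"
          proof (cases "g y")
            case (real gy)
            then show ?thesis using bound[of y gy] by (simp add: u_def coupling_def)
          next
            case PInf
            then show ?thesis by (simp add: lminus_inf_right)
          next
            case MInf
            then show ?thesis using gnm by simp
          qed
        qed
        have Gge: "ereal (us x - gx) \<le> G"
        proof -
          have "lminus (coupling x u) (g x) \<le> G"
            unfolding G_def c_conj_def by (rule SUP_upper) simp
          then show ?thesis by (simp add: u_def coupling_def gx)
        qed
        obtain Gr where Gr: "G = ereal Gr" using Gle Gge by (cases G) auto
        have Grle: "Gr \<le> us x - gx + \<epsilon>" using Gle Gr by simp
        have udom: "u \<in> dom_W Xs (c_conj Xs g)"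
          unfolding dom_W_def Wset_def using usX zero Gr
          by (simp add: u_def G_def)
        have "(SUP z\<in>Zset Xs. phi_F Xs f g A u z) \<le> ereal (fx - gx + \<epsilon>)"
        proof (rule SUP_least)
          fix z assume "z \<in> Zset Xs"
          obtain zx zy \<alpha> where z: "z = (zx, zy, \<alpha>)" by (cases z) auto
          define F0 where "F0 = lminus (coupling x (\<lambda>y. us y - zx y, \<lambda>y. - zy y, \<alpha>)) (f x)"
          define D0 where "D0 = lminus (coupling x (zx, zy, \<alpha>)) (indicator_ereal A x)"
          have "F0 \<le> c_conj Xs f (\<lambda>y. us y - zx y, \<lambda>y. - zy y, \<alpha>)"
            unfolding F0_def c_conj_def by (rule SUP_upper) simp
          moreover have "D0 \<le> c_conj Xs (indicator_ereal A) (zx, zy, \<alpha>)"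
            unfolding D0_def c_conj_def by (rule SUP_upper) simp
          moreover have "phi_F Xs f g A u z = lminus (lminus G
              (c_conj Xs f (\<lambda>y. us y - zx y, \<lambda>y. - zy y, \<alpha>)))
              (c_conj Xs (indicator_ereal A) (zx, zy, \<alpha>))"
            by (simp add: phi_F_def z u_def G_def)
          ultimately have "phi_F Xs f g A u z \<le> lminus (lminus G F0) D0"
            by (simp add: lminus_mono)
          also have "\<dots> \<le> ereal (fx - gx + \<epsilon>)"
          proof (cases "- zy x < \<alpha> \<and> zy x < \<alpha>")
            case True
            then have "lminus (lminus G F0) D0 = ereal (Gr - us x + fx)"
              by (simp add: F0_def D0_def coupling_def fx Gr xA indicator_ereal_def zero_ereal_def)
            then show ?thesis using Grle by simp
          next
            case False
            then consider "\<not> - zy x < \<alpha>" | "\<not> zy x < \<alpha>" by blast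
            then show ?thesis
            proof cases
              case 1
              then have "F0 = \<infinity>"
                by (simp add: F0_def coupling_def fx lminus_def ladd_def)
              then show ?thesis by (simp add: Gr lminus_inf_right lminus_minf_left)
            next
              case 2
              then have "D0 = \<infinity>"
                by (simp add: D0_def coupling_def xA indicator_ereal_def lminus_def ladd_def)
              then show ?thesis by (simp add: lminus_inf_right)
            qed
          qed
          finally show "phi_F Xs f g A u z \<le> ereal (fx - gx + \<epsilon>)" .
        qed
        then have "vDF_bar Xs f g A \<le> ereal (fx - gx + \<epsilon>)"
          unfolding vDF_bar_def using udom by (meson INF_lower2)
        then show "vDF_bar Xs f g A \<le> f x - g x + indicator_ereal A x + ereal \<epsilon>"
          by (simp add: fx gx xA indicator_ereal_def)
      qed
    qed
  qed
next
  show "vDF Xs f g A \<le> vDF_bar Xs f g A"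
    unfolding vDF_def vDF_bar_def
    by (rule SUP_least, rule INF_greatest) (meson INF_lower SUP_upper order_trans)
qed

end
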